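(* Let $n\ge 2$ and let $\mathsf{M}$ be a square submatrix of a matrix in $\mathscr{D}_n$. Then $$|\det\mathsf{M}|\in\{0,2^0,2^1,\dots,2^{\lfloor n/2\rfloor}\}.$$
   Context: Let $e_1,\dots,e_n$ be the standard basis of $\mathbb{R}^n$ and $[\pm n]=\{-n,\dots,-1,1,\dots,n\}$. For $i\in[n-1]$ and $r\in[\pm n]$ with $i<|r|$, set $d(i,r)=e_i+\mathrm{sgn}(r)\,e_{|r|}\in\mathbb{R}^n$. $\mathscr{D}_n$ denotes the set of $n\times n$ real matrices each of whose rows is of the form $d(i,r)$ for some such $i,r$ (rows may repeat). A square submatrix is obtained by deleting some rows and the same number of columns. *)

theory Defs
  imports "Jordan_Normal_Form.Determinant" "Jordan_Normal_Form.DL_Submatrix"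
begin

text \<open>Coordinates of R^n are numbered 1..n in the paper; in the
  JNF vector type index j (0-based) corresponds to coordinate j+1.
  An index r in [+-n] is an integer with r \<noteq> 0 and |r| \<le> n.\<close>

definition valid_pair :: "nat \<Rightarrow> nat \<Rightarrow> int \<Rightarrow> bool" where
  "valid_pair n i r \<longleftrightarrow> 1 \<le> i \<and> i \<le> n - 1 \<and> r \<noteq> 0 \<and> \<bar>r\<bar> \<le> int n \<and> int i < \<bar>r\<bar>"

definition dvec :: "nat \<Rightarrow> nat \<Rightarrow> int \<Rightarrow> real vec" where
  "dvec n i r = vec n (\<lambda>j. (if j + 1 = i then 1 else 0)
                         + (if int (j + 1) = \<bar>r\<bar> then real_of_int (sgn r) else 0))"

definition in_Dn :: "nat \<Rightarrow> real mat \<Rightarrow> bool" where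
  "in_Dn n D \<longleftrightarrow> D \<in> carrier_mat n n \<and>
     (\<forall>k<n. \<exists>i r. valid_pair n i r \<and> row D k = dvec n i r)"

end

theory Submission imports Defs begin

definition goodm :: "nat \<Rightarrow> real mat \<Rightarrow> bool" where
  "goodm k A \<longleftrightarrow> A \<in> carrier_mat k k \<and> (\<forall>i<k. \<forall>j<k. A$$(i,j) \<in> {-1,0,1})
     \<and> (\<forall>i<k. card {j. j<k \<and> A$$(i,j) \<noteq> 0} \<le> 2)"

definition Sset :: "nat \<Rightarrow> real set" where
  "Sset k = {0} \<union> {2 ^ m | m. m \<le> k div 2}"

lemma Sset_mono: "k \<le> k' \<Longrightarrow> Sset k \<subseteq> Sset k'"
  unfolding Sset_def using div_le_mono by fastforce

lemma Sset_double: assumes "x \<in> Sset (k-2)" "k \<ge> 2" shows "2 * x \<in> Sset k"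
proof -
  have e: "(k-2) div 2 + 1 = k div 2" using assms(2) by (simp add: div_if)
  from assms(1) consider "x = 0" | m where "x = 2^m" "m \<le> (k-2) div 2" unfolding Sset_def by auto
  then show ?thesis
  proof cases
    case 1 then show ?thesis by (simp add: Sset_def)
  next
    case (2 m)
    then have "2*x = 2^(Suc m)" "Suc m \<le> k div 2" using e by auto
    then show ?thesis unfolding Sset_def by blast
  qed
qed

lemma count_eq_sum: fixes k :: nat and P :: "nat \<Rightarrow> bool" shows "card {j. j<k \<and> P j} = (\<Sum>j<k. if P j then 1 else 0 :: nat)"
proof -
  have "card {j. j<k \<and> P j} = card {j\<in>{..<k}. P j}" by (rule arg_cong[where f=card]) auto
  also have "card {j\<in>{..<k}. P j} = sum (\<lambda>_. 1) {j\<in>{..<k}. P j}" by (rule card_eq_sum)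
  also have "\<dots> = (\<Sum>j<k. if P j then 1 else 0)" using sum.inter_filter[OF finite_lessThan, where g="\<lambda>_. (1::nat)" and P=P] by simp
  finally show ?thesis .
qed

lemma good_col:
  assumes "goodm k A" "k \<ge> 1"
  shows "\<exists>c<k. card {i. i<k \<and> A$$(i,c) \<noteq> 0} \<le> 2"
proof (rule ccontr)
  assume "\<not> ?thesis"
  then have h: "\<forall>c<k. 3 \<le> (\<Sum>i<k. if A$$(i,c) \<noteq> 0 then 1 else 0 :: nat)"
    by (auto simp: count_eq_sum not_le)
  have "3 * k = (\<Sum>c<k. 3::nat)" by simp
  also have "\<dots> \<le> (\<Sum>c<k. \<Sum>i<k. if A$$(i,c) \<noteq> 0 then 1 else 0 :: nat)"
    by (rule sum_mono) (use h in auto)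
  also have "\<dots> = (\<Sum>i<k. \<Sum>c<k. if A$$(i,c) \<noteq> 0 then 1 else 0 :: nat)"
    by (rule sum.swap)
  also have "\<dots> \<le> (\<Sum>i<k. 2)"
    by (rule sum_mono) (use assms(1) in \<open>auto simp: goodm_def count_eq_sum[symmetric]\<close>)
  also have "\<dots> = 2 * k" by simp
  finally show False using assms(2) by simp
qed

lemma mat_delete_idx: assumes "A \<in> carrier_mat k k" "i < k - 1" "j < k - 1"
  shows "mat_delete A p c $$ (i,j) = A $$ (insert_index p i, insert_index c j)"
  using assms unfolding mat_delete_def insert_index_def by auto

lemma good_delete:
  assumes "goodm k A" "p < k" "c < k"
  shows "goodm (k-1) (mat_delete A p c)"
proof -
  have A: "A \<in> carrier_mat k k" using assms goodm_def by auto
  have ii: "\<And>x. x < k - 1 \<Longrightarrow> insert_index p x < k" "\<And>x. x < k - 1 \<Longrightarrow> insert_index c x < k"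
    unfolding insert_index_def by auto
  show ?thesis unfolding goodm_def
  proof (intro conjI allI impI)
    show "mat_delete A p c \<in> carrier_mat (k - 1) (k - 1)" using mat_delete_carrier[OF A] .
    fix i j assume i: "i < k-1" and j: "j < k - 1"
    then show "mat_delete A p c $$ (i, j) \<in> {- 1, 0, 1}"
      using assms(1) ii[OF i] ii(2)[OF j] by (simp add: mat_delete_idx[OF A] goodm_def)
  next
    fix i assume i: "i < k - 1"
    have "card {j. j < k - 1 \<and> mat_delete A p c $$ (i, j) \<noteq> 0}
       \<le> card {j. j<k \<and> A$$(insert_index p i,j) \<noteq> 0}"
    proof (rule card_inj_on_le[of "insert_index c"])
      show "inj_on (insert_index c) {j. j < k - 1 \<and> mat_delete A p c $$ (i, j) \<noteq> 0}"
        by (rule insert_index_inj_on)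
      show "insert_index c ` {j. j < k - 1 \<and> mat_delete A p c $$ (i, j) \<noteq> 0}
          \<subseteq> {j. j<k \<and> A$$(insert_index p i,j) \<noteq> 0}"
        using ii(2) i by (auto simp: mat_delete_idx[OF A])
    qed auto
    also have "\<dots> \<le> 2" using assms(1) ii(1)[OF i] by (simp add: goodm_def)
    finally show "card {j. j < k - 1 \<and> mat_delete A p c $$ (i, j) \<noteq> 0} \<le> 2" .
  qed
qed

lemma colone:
  assumes IH: "\<And>M. goodm (k-1) M \<Longrightarrow> \<bar>det M\<bar> \<in> Sset (k-1)"
    and g: "goodm k A" and k: "k \<ge> 1" and c: "c < k"
    and u: "\<And>i i'. i<k \<Longrightarrow> i'<k \<Longrightarrow> A$$(i,c)\<noteq>0 \<Longrightarrow> A$$(i',c)\<noteq>0 \<Longrightarrow> i=i'"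
  shows "\<bar>det A\<bar> \<in> Sset (k-1)"
proof -
  have A: "A \<in> carrier_mat k k" using g goodm_def by auto
  have L: "det A = (\<Sum>i<k. A $$ (i,c) * cofactor A i c)" by (rule laplace_expansion_column[OF A c])
  show ?thesis
  proof (cases "\<exists>p<k. A$$(p,c) \<noteq> 0")
    case False
    then have "det A = 0" unfolding L by (intro sum.neutral) auto
    then show ?thesis by (simp add: Sset_def)
  next
    case True
    then obtain p where p: "p<k" "A$$(p,c) \<noteq> 0" by auto
    have "(\<Sum>i<k. A $$ (i,c) * cofactor A i c) = (\<Sum>i<k. if i = p then A $$ (p,c) * cofactor A p c else 0)"
      by (rule sum.cong) (use u p in auto)
    also have "\<dots> = A $$ (p,c) * cofactor A p c" using p by simp
    finally have d: "det A = A $$ (p,c) * cofactor A p c" using L by simp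
    have "A $$ (p,c) \<in> {-1,1}" using g p c unfolding goodm_def by auto
    then have "\<bar>det A\<bar> = \<bar>det (mat_delete A p c)\<bar>" unfolding d cofactor_def
      by (auto simp: abs_mult)
    then show ?thesis using IH[OF good_delete[OF g p(1) c]] by simp
  qed
qed

lemma insert_index_neq: "insert_index q i \<noteq> q" unfolding insert_index_def by auto
lemma insert_index_lt: "i < k - 1 \<Longrightarrow> q < k \<Longrightarrow> insert_index q i < k" unfolding insert_index_def by auto

lemma card3: assumes "finite S" "x \<in> S" "y \<in> S" "z \<in> S" "x \<noteq> y" "x \<noteq> z" "y \<noteq> z"
  shows "card S \<ge> 3"
proof -
  have "card {x,y,z} \<le> card S" using assms by (intro card_mono) auto
  moreover have "card {x,y,z} = 3" using assms by auto
  ultimately show ?thesis by simp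
qed

lemma main_good: "goodm k A \<Longrightarrow> \<bar>det A\<bar> \<in> Sset k"
proof (induction k arbitrary: A rule: less_induct)
  case (less k A)
  note g = less.prems
  have A: "A \<in> carrier_mat k k" using g goodm_def by auto
  have ent: "\<And>i j. i<k \<Longrightarrow> j<k \<Longrightarrow> A$$(i,j) \<in> {-1,0,1}" using g goodm_def by auto
  have rowc: "\<And>i. i<k \<Longrightarrow> card {j. j<k \<and> A$$(i,j) \<noteq> 0} \<le> 2" using g goodm_def by auto
  show ?case
  proof (cases "k = 0")
    case True
    then have "det A = 1" using A by simp
    then show ?thesis by (force simp: Sset_def)
  next
    case False
    then have k1: "k \<ge> 1" by simp
    have IH1: "\<And>M. goodm (k-1) M \<Longrightarrow> \<bar>det M\<bar> \<in> Sset (k-1)" using less.IH k1 by simp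
    have S1: "Sset (k-1) \<subseteq> Sset k" by (rule Sset_mono) simp
    obtain c where c: "c < k" "card {i. i<k \<and> A$$(i,c) \<noteq> 0} \<le> 2" using good_col[OF g k1] by auto
    show ?thesis
    proof (cases "\<forall>i i'. i<k \<longrightarrow> i'<k \<longrightarrow> A$$(i,c)\<noteq>0 \<longrightarrow> A$$(i',c)\<noteq>0 \<longrightarrow> i=i'")
      case True
      then show ?thesis using colone[OF IH1 g k1 c(1)] S1 by blast
    next
      case False
      then obtain p q where pq: "p<k" "q<k" "A$$(p,c)\<noteq>0" "A$$(q,c)\<noteq>0" "p\<noteq>q" by auto
      have only: "\<And>i. i<k \<Longrightarrow> A$$(i,c)\<noteq>0 \<Longrightarrow> i=p \<or> i=q"
      proof (rule ccontr)
        fix i assume i: "i<k" "A$$(i,c)\<noteq>0" "\<not> (i=p \<or> i=q)"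
        have "card {i. i<k \<and> A$$(i,c) \<noteq> 0} \<ge> 3"
          by (rule card3[of _ p q i]) (use i pq in auto)
        then show False using c by simp
      qed
      have apc: "A$$(p,c) \<in> {-1,1}" "A$$(q,c) \<in> {-1,1}" using ent pq c by fastforce+
      define s where "s = A$$(q,c) * A$$(p,c)"
      have s: "s \<in> {-1,1}" using apc by (auto simp: s_def)
      have sp: "s * A$$(p,c) = A$$(q,c)" using apc by (auto simp: s_def)
      define B where "B = addrow (-s) q p A"
      have B: "B \<in> carrier_mat k k" using A by (simp add: B_def mat_addrow_def)
      have Bij: "\<And>i j. i<k \<Longrightarrow> j<k \<Longrightarrow> B$$(i,j) = (if q = i then -s * A$$(p,j) + A$$(q,j) else A$$(i,j))"
        using A by (simp add: B_def mat_addrow_def)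
      have dB: "det B = det A" unfolding B_def by (rule det_addrow[OF pq(1) _ A]) (use pq in auto)
      have Bqc: "B$$(q,c) = 0" using Bij[OF pq(2) c(1)] sp by simp
      show ?thesis
      proof (cases "\<forall>j<k. B$$(q,j) \<in> {-1,0,1}")
        case True
        have gB: "goodm k B" unfolding goodm_def
        proof (intro conjI allI impI)
          show "B \<in> carrier_mat k k" by (rule B)
          fix i j assume "i<k" "j<k"
          then show "B $$ (i, j) \<in> {- 1, 0, 1}" using True ent Bij by (cases "i = q") auto
        next
          fix i assume i: "i<k"
          show "card {j. j < k \<and> B $$ (i, j) \<noteq> 0} \<le> 2"
          proof (cases "i = q")
            case False
            then have "{j. j < k \<and> B $$ (i, j) \<noteq> 0} = {j. j<k \<and> A$$(i,j) \<noteq> 0}" using Bij i by auto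
            then show ?thesis using rowc i by simp
          next
            case True
            let ?P = "{j. j<k \<and> A$$(p,j) \<noteq> 0} - {c}" and ?Q = "{j. j<k \<and> A$$(q,j) \<noteq> 0} - {c}"
            have "{j. j < k \<and> B $$ (i, j) \<noteq> 0} \<subseteq> ?P \<union> ?Q" using Bij[OF pq(2)] True Bqc by auto
            then have "card {j. j < k \<and> B $$ (i, j) \<noteq> 0} \<le> card (?P \<union> ?Q)" by (intro card_mono) auto
            also have "\<dots> \<le> card ?P + card ?Q" by (rule card_Un_le)
            also have "card ?P = card {j. j<k \<and> A$$(p,j) \<noteq> 0} - 1" using pq c by (intro card_Diff_singleton) auto
            also have "card ?Q = card {j. j<k \<and> A$$(q,j) \<noteq> 0} - 1" using pq c by (intro card_Diff_singleton) auto
            finally show ?thesis using rowc[OF pq(1)] rowc[OF pq(2)] by linarith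
          qed
        qed
        have uB: "\<And>i i'. i<k \<Longrightarrow> i'<k \<Longrightarrow> B$$(i,c)\<noteq>0 \<Longrightarrow> B$$(i',c)\<noteq>0 \<Longrightarrow> i=i'"
        proof -
          fix i i' assume "i<k" "i'<k" "B$$(i,c)\<noteq>0" "B$$(i',c)\<noteq>0"
          then show "i = i'" using only Bqc Bij c(1) by (metis)
        qed
        show ?thesis using colone[OF IH1 gB k1 c(1) uB] S1 dB by auto
      next
        case False
        then obtain a where a: "a<k" "B$$(q,a) \<notin> {-1,0,1}" by auto
        have Bqa: "B$$(q,a) = -s * A$$(p,a) + A$$(q,a)" using Bij[OF pq(2) a(1)] by simp
        have nz: "A$$(p,a) \<noteq> 0" "A$$(q,a) \<noteq> 0"
          using a(2) Bqa ent[OF pq(1) a(1)] ent[OF pq(2) a(1)] s by auto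
        have ac: "a \<noteq> c" using a(2) Bqc by auto
        have two: "\<bar>B$$(q,a)\<bar> = 2"
          using a(2) Bqa ent[OF pq(1) a(1)] ent[OF pq(2) a(1)] s by auto
        have Bq0: "\<And>j. j<k \<Longrightarrow> j \<noteq> a \<Longrightarrow> B$$(q,j) = 0"
        proof -
          fix j assume j: "j<k" "j\<noteq>a"
          show "B$$(q,j) = 0"
          proof (cases "j = c")
            case True then show ?thesis using Bqc by simp
          next
            case False
            have "A$$(p,j) = 0"
            proof (rule ccontr)
              assume nzj: "A$$(p,j) \<noteq> 0"
              have "card {j. j<k \<and> A$$(p,j) \<noteq> 0} \<ge> 3"
                by (rule card3[of _ a c j]) (use j False ac a(1) nz pq c(1) nzj in auto)
              then show False using rowc[OF pq(1)] by simp
            qed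
            moreover have "A$$(q,j) = 0"
            proof (rule ccontr)
              assume nzj: "A$$(q,j) \<noteq> 0"
              have "card {j. j<k \<and> A$$(q,j) \<noteq> 0} \<ge> 3"
                by (rule card3[of _ a c j]) (use j False ac a(1) nz pq c(1) nzj in auto)
              then show False using rowc[OF pq(2)] by simp
            qed
            ultimately show ?thesis using Bij[OF pq(2) j(1)] by simp
          qed
        qed
        have LB: "det B = (\<Sum>j<k. B $$ (q,j) * cofactor B q j)" by (rule laplace_expansion_row[OF B pq(2)])
        have "(\<Sum>j<k. B $$ (q,j) * cofactor B q j) = (\<Sum>j<k. if j = a then B $$ (q,a) * cofactor B q a else 0)"
          by (rule sum.cong) (use Bq0 in auto)
        also have "\<dots> = B $$ (q,a) * cofactor B q a" using a by simp
        finally have dB2: "det B = B $$ (q,a) * cofactor B q a" using LB by simp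
        define M where "M = mat_delete A q a"
        have MB: "mat_delete B q a = M" unfolding M_def
        proof (rule eq_matI)
          fix i j assume "i < dim_row (mat_delete A q a)" "j < dim_col (mat_delete A q a)"
          then have ij: "i < k-1" "j < k-1" using A by auto
          show "mat_delete B q a $$ (i, j) = mat_delete A q a $$ (i, j)"
            unfolding mat_delete_idx[OF B ij] mat_delete_idx[OF A ij]
            using Bij[OF insert_index_lt[OF ij(1) pq(2)] insert_index_lt[OF ij(2) a(1)]] insert_index_neq[of q i]
            by simp
        qed (use A B in auto)
        have absA: "\<bar>det A\<bar> = 2 * \<bar>det M\<bar>"
        proof -
          have "\<bar>det A\<bar> = \<bar>B$$(q,a) * ((-1)^(q+a) * det M)\<bar>" using dB dB2 MB by (simp add: cofactor_def)
          also have "\<dots> = 2 * \<bar>det M\<bar>" using two by (simp add: abs_mult power_abs)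
          finally show ?thesis .
        qed
        have gM: "goodm (k-1) M" unfolding M_def by (rule good_delete[OF g pq(2) a(1)])
        have k2: "k \<ge> 2" using pq by auto
        define c' where "c' = (if c < a then c else c - 1)"
        have c'1: "insert_index a c' = c" "c' < k - 1" using ac c(1) a(1) unfolding c'_def insert_index_def by auto
        have Mic: "\<And>i. i < k-1 \<Longrightarrow> M$$(i,c') = A$$(insert_index q i, c)"
          unfolding M_def using mat_delete_idx[OF A _ c'1(2)] c'1(1) by simp
        have uM: "\<And>i i'. i<k-1 \<Longrightarrow> i'<k-1 \<Longrightarrow> M$$(i,c')\<noteq>0 \<Longrightarrow> M$$(i',c')\<noteq>0 \<Longrightarrow> i=i'"
        proof -
          fix i i' assume ii: "i<k-1" "i'<k-1" "M$$(i,c')\<noteq>0" "M$$(i',c')\<noteq>0"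
          have "insert_index q i = p" using only[OF insert_index_lt[OF ii(1) pq(2)]] ii(3) Mic[OF ii(1)] insert_index_neq[of q i] by auto
          moreover have "insert_index q i' = p" using only[OF insert_index_lt[OF ii(2) pq(2)]] ii(4) Mic[OF ii(2)] insert_index_neq[of q i'] by auto
          ultimately show "i = i'" using insert_index_inj_on[of q UNIV] by (auto dest: inj_onD)
        qed
        have IH2: "\<And>M. goodm (k-1-1) M \<Longrightarrow> \<bar>det M\<bar> \<in> Sset (k-1-1)" using less.IH k2 by simp
        have "\<bar>det M\<bar> \<in> Sset (k-1-1)" using colone[OF IH2 gM _ c'1(2) uM] k2 by simp
        moreover have "k - 1 - 1 = k - 2" by simp
        ultimately have "2 * \<bar>det M\<bar> \<in> Sset k" using Sset_double[OF _ k2] by metis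
        then show ?thesis using absA by simp
      qed
    qed
  qed
qed

lemma card_two: "card {x, y :: nat} \<le> 2" by (cases "x = y") auto

theorem mainTheorem4:
  fixes n :: nat and D :: "real mat" and I J :: "nat set"
  assumes "n \<ge> 2"
    and "in_Dn n D"
    and "I \<subseteq> {..<n}" and "J \<subseteq> {..<n}" and "card I = card J"
  shows "\<bar>det (submatrix D I J)\<bar> \<in> {0} \<union> {2 ^ k | k. k \<le> n div 2}"
proof -
  have Dc: "D \<in> carrier_mat n n" using assms(2) in_Dn_def by auto
  define m where "m = card I"
  have cI: "{i. i < dim_row D \<and> i \<in> I} = I" "{i. i < dim_col D \<and> i \<in> J} = J"
    using Dc assms(3,4) by auto
  have mn: "m \<le> n" unfolding m_def using card_mono[OF _ assms(3)] by simp
  have cJ: "card J = m" using assms(5) m_def by simp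
  have Ent: "\<And>k j. k<n \<Longrightarrow> j<n \<Longrightarrow> \<exists>i r. valid_pair n i r \<and> D$$(k,j) =
      (if j + 1 = i then 1 else 0) + (if int (j + 1) = \<bar>r\<bar> then real_of_int (sgn r) else 0)"
  proof -
    fix k j assume kj: "k<n" "j<n"
    obtain i r where ir: "valid_pair n i r" "row D k = dvec n i r" using assms(2) kj unfolding in_Dn_def by blast
    have "D$$(k,j) = row D k $ j" using Dc kj by simp
    also have "\<dots> = dvec n i r $ j" using ir by simp
    finally show "\<exists>i r. valid_pair n i r \<and> D$$(k,j) =
      (if j + 1 = i then 1 else 0) + (if int (j + 1) = \<bar>r\<bar> then real_of_int (sgn r) else 0)"
      using ir(1) kj unfolding dvec_def by auto
  qed
  have pI: "\<And>i. i<m \<Longrightarrow> pick I i < n" using pick_in_set[of _ I] assms(3) m_def by auto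
  have pJ: "\<And>i. i<m \<Longrightarrow> pick J i < n" using pick_in_set[of _ J] assms(4) cJ by auto
  have pJinj: "inj_on (pick J) {..<m}"
  proof (rule inj_onI)
    fix x y assume "x \<in> {..<m}" "y \<in> {..<m}" "pick J x = pick J y"
    then show "x = y" using pick_mono[of x J y] pick_mono[of y J x] cJ
      by (metis lessThan_iff less_irrefl linorder_neqE_nat)
  qed
  let ?S = "submatrix D I J"
  have Sc: "?S \<in> carrier_mat m m" unfolding submatrix_def using cI m_def cJ by simp
  have Sij: "\<And>i j. i<m \<Longrightarrow> j<m \<Longrightarrow> ?S $$ (i,j) = D$$(pick I i, pick J j)"
    using submatrix_index[of _ D I _ J] cI m_def cJ by simp
  have g: "goodm m ?S" unfolding goodm_def
  proof (intro conjI allI impI)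
    show "?S \<in> carrier_mat m m" by (rule Sc)
    fix i j assume ij: "i<m" "j<m"
    obtain a r where ar: "valid_pair n a r" "D$$(pick I i, pick J j) =
      (if pick J j + 1 = a then 1 else 0) + (if int (pick J j + 1) = \<bar>r\<bar> then real_of_int (sgn r) else 0)"
      using Ent[OF pI[OF ij(1)] pJ[OF ij(2)]] by blast
    have "sgn r = 1 \<or> sgn r = -1" using ar(1) unfolding valid_pair_def by (auto simp: sgn_if)
    then show "?S $$ (i, j) \<in> {- 1, 0, 1}" using Sij[OF ij] ar unfolding valid_pair_def by auto
  next
    fix i assume i: "i<m"
    obtain a r where ar: "valid_pair n a r" "\<And>j. j < m \<Longrightarrow> D$$(pick I i, pick J j) =
      (if pick J j + 1 = a then 1 else 0) + (if int (pick J j + 1) = \<bar>r\<bar> then real_of_int (sgn r) else 0)"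
    proof -
      obtain a r where ir: "valid_pair n a r" "row D (pick I i) = dvec n a r"
        using assms(2) pI[OF i] unfolding in_Dn_def by blast
      have "\<And>j. j < m \<Longrightarrow> D$$(pick I i, pick J j) =
      (if pick J j + 1 = a then 1 else 0) + (if int (pick J j + 1) = \<bar>r\<bar> then real_of_int (sgn r) else 0)"
      proof -
        fix j assume j: "j<m"
        have "D$$(pick I i, pick J j) = row D (pick I i) $ pick J j" using Dc pI[OF i] pJ[OF j] by simp
        also have "\<dots> = dvec n a r $ pick J j" using ir by simp
        finally show "D$$(pick I i, pick J j) =
      (if pick J j + 1 = a then 1 else 0) + (if int (pick J j + 1) = \<bar>r\<bar> then real_of_int (sgn r) else 0)"
          using pJ[OF j] unfolding dvec_def by auto
      qed
      then show ?thesis using that ir(1) by blast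
    qed
    have sub: "pick J ` {j. j < m \<and> ?S $$ (i, j) \<noteq> 0} \<subseteq> {a - 1, nat \<bar>r\<bar> - 1}"
    proof
      fix x assume "x \<in> pick J ` {j. j < m \<and> ?S $$ (i, j) \<noteq> 0}"
      then obtain j where j: "j<m" "?S $$ (i,j) \<noteq> 0" "x = pick J j" by auto
      then have "x + 1 = a \<or> int (x + 1) = \<bar>r\<bar>" using Sij[OF i j(1)] ar(2)[OF j(1)]
        by (auto split: if_splits)
      then show "x \<in> {a - 1, nat \<bar>r\<bar> - 1}" by auto
    qed
    have "card {j. j < m \<and> ?S $$ (i, j) \<noteq> 0} \<le> card {a - 1, nat \<bar>r\<bar> - 1}"
      by (rule card_inj_on_le[OF _ sub]) (auto intro: inj_on_subset[OF pJinj])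
    then show "card {j. j < m \<and> ?S $$ (i, j) \<noteq> 0} \<le> 2" using card_two order_trans by blast
  qed
  have "\<bar>det ?S\<bar> \<in> Sset m" by (rule main_good[OF g])
  then show ?thesis using Sset_mono[OF mn] unfolding Sset_def by blast
qed

end
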